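(* Let $q>0$, $\mu=\sqrt q$, $H$ a $d$-dimensional Hilbert space with orthonormal basis $(\psi_r)$, $2\le n\le d$ and $1\le i_1<\dots<i_n\le d$. Set $\overline H_{i_1,\dots,i_n}:=\varepsilon(E_{n-1})H_{i_1,\dots,i_n}^{\otimes(n-1)}$, $R_{i_1,\dots,i_n}:=\frac{1}{\mu^{(n-1)/2}\sqrt{(n-1)!_q}}S_{i_1,\dots,i_n}$ and $\overline R_{i_1,\dots,i_n}:=(-1)^{n-1}R_{i_1,\dots,i_n}$. Then $R_{i_1,\dots,i_n}\in\overline H_{i_1,\dots,i_n}\otimes H_{i_1,\dots,i_n}$, $\overline R_{i_1,\dots,i_n}\in H_{i_1,\dots,i_n}\otimes\overline H_{i_1,\dots,i_n}$, and the conjugate equations hold: $(\overline R_{i_1,\dots,i_n}^*\otimes1_{H_{i_1,\dots,i_n}})(1_{H_{i_1,\dots,i_n}}\otimes R_{i_1,\dots,i_n})=1_{H_{i_1,\dots,i_n}}$, $(R_{i_1,\dots,i_n}^*\otimes1_{\overline H_{i_1,\dots,i_n}})(1_{\overline H_{i_1,\dots,i_n}}\otimes\overline R_{i_1,\dots,i_n})=1_{\overline H_{i_1,\dots,i_n}}$. Hence $\overline H_{i_1,\dots,i_n}$ is a conjugate of $H_{i_1,\dots,i_n}$ in the smallest tensor $*$-category of Hilbert spaces (with subobjects) containing $S_{i_1,\dots,i_n}$.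
   Context: $g_q$ on $H\otimes H$: $g_q\psi_i\otimes\psi_j=-\mu\psi_j\otimes\psi_i$ ($i<j$), $g_q\psi_i\otimes\psi_i=-\psi_i\otimes\psi_i$, $g_q\psi_i\otimes\psi_j=(q-1)\psi_i\otimes\psi_j-\mu\psi_j\otimes\psi_i$ ($i>j$); Jimbo–Woronowicz representation $\varepsilon(g_i)=1_{H^{\otimes(i-1)}}\otimes g_q\otimes1$ of the Hecke algebras $H_m(q)$. $A_1=1$, $A_{m+1}=\sum_{i=0}^mg_i\cdots g_1\sigma(A_m)$, $\sigma(g_i)=g_{i+1}$, $m!_q=\prod_{j=1}^m(1+\dots+q^{j-1})$, $E_m=A_m/m!_q$. $S_{i_1,\dots,i_n}:=\sum_{p\in\mathbb P_n}(-\mu)^{i(p)}\psi_{i_{p(1)}}\otimes\dots\otimes\psi_{i_{p(n)}}$ with $i(p)$ the number of inversions of $p$, viewed as a map $\mathbb C\to H^{\otimes n}$. $H_{i_1,\dots,i_n}=\mathrm{span}\{\psi_{i_1},\dots,\psi_{i_n}\}$. Objects $\sigma,\bar\sigma$ are conjugate if there are $R\in(\iota,\bar\sigma\otimes\sigma)$, $\bar R\in(\iota,\sigma\otimes\bar\sigma)$ satisfying the two conjugate equations above. *)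

theory Defs
  imports "HOL-Analysis.Analysis" "HOL-Combinatorics.Permutations"
begin

text \<open>Model: H = C^d with orthonormal basis psi_1,...,psi_d.  A vector of the tensor
power H^{(x)m} is a function  nat list => complex  supported on lists of length m
with entries in {1..d}; the value at [j1,...,jm] is the coefficient of
psi_j1 (x) ... (x) psi_jm.\<close>

type_synonym tvec = "nat list \<Rightarrow> complex"

definition words :: "nat \<Rightarrow> nat \<Rightarrow> nat list set" where
  "words d m = {js. length js = m \<and> set js \<subseteq> {1..d}}"

text \<open>Tensor powers of the subspace spanned by the basis vectors with indices in I.\<close>
definition tpow_sub :: "nat set \<Rightarrow> nat \<Rightarrow> tvec set" where
  "tpow_sub I m = {v. \<forall>js. v js \<noteq> 0 \<longrightarrow> length js = m \<and> set js \<subseteq> I}"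

text \<open>Tensor product of vectors, the first factor living in a k-th tensor power.\<close>
definition tens :: "nat \<Rightarrow> tvec \<Rightarrow> tvec \<Rightarrow> tvec" where
  "tens k v w = (\<lambda>js. v (take k js) * w (drop k js))"

definition cspan :: "tvec set \<Rightarrow> tvec set" where
  "cspan S = {x. \<exists>F c. finite F \<and> F \<subseteq> S \<and> x = (\<lambda>js. \<Sum>v\<in>F. c v * v js)}"

definition tens_sub :: "nat \<Rightarrow> tvec set \<Rightarrow> tvec set \<Rightarrow> tvec set" where
  "tens_sub k V W = cspan {tens k v w | v w. v \<in> V \<and> w \<in> W}"

definition mu :: "real \<Rightarrow> complex" where
  "mu q = complex_of_real (sqrt q)"

text \<open>epsilon(g_i) = 1 (x) g_q (x) 1, acting on the tensor factors i and i+1 (1-indexed).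
The coefficient formula is obtained from
  g_q(psi_a(x)psi_b) = -mu psi_b(x)psi_a (a<b),  g_q(psi_a(x)psi_a) = -psi_a(x)psi_a,
  g_q(psi_a(x)psi_b) = (q-1) psi_a(x)psi_b - mu psi_b(x)psi_a (a>b).
Outside the range 1 <= i < length it is (irrelevantly) the identity.\<close>
definition gop :: "real \<Rightarrow> nat \<Rightarrow> tvec \<Rightarrow> tvec" where
  "gop q i v js =
    (if 1 \<le> i \<and> i < length js then
       (let a = js ! (i - 1); b = js ! i; sw = js[i - 1 := b, i := a] in
        if a = b then - v js
        else - mu q * v sw + (if b < a then complex_of_real (q - 1) * v js else 0))
     else v js)"

primrec gprod :: "real \<Rightarrow> nat \<Rightarrow> nat \<Rightarrow> tvec \<Rightarrow> tvec" where
  "gprod q s 0 = id"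
| "gprod q s (Suc i) = gop q (Suc i + s) \<circ> gprod q s i"

text \<open>Aop q m s = epsilon(sigma^s(A_m)), where A_1 = 1,
  A_(m+1) = sum_(i=0..m) g_i ... g_1 sigma(A_m),  sigma(g_i) = g_(i+1).\<close>
fun Aop :: "real \<Rightarrow> nat \<Rightarrow> nat \<Rightarrow> tvec \<Rightarrow> tvec" where
  "Aop q 0 s = id"
| "Aop q (Suc 0) s = id"
| "Aop q (Suc (Suc m)) s =
     (\<lambda>v js. \<Sum>i\<le>Suc m. gprod q s i (Aop q (Suc m) (Suc s) v) js)"

definition qfact :: "real \<Rightarrow> nat \<Rightarrow> real" where
  "qfact q m = (\<Prod>j=1..m. \<Sum>k<j. q ^ k)"

definition Eop :: "real \<Rightarrow> nat \<Rightarrow> tvec \<Rightarrow> tvec" where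
  "Eop q m v = (\<lambda>js. Aop q m 0 v js / complex_of_real (qfact q m))"

definition inversions :: "nat \<Rightarrow> (nat \<Rightarrow> nat) \<Rightarrow> nat" where
  "inversions n p = card {(a, b). a < b \<and> b < n \<and> p b < p a}"

definition Svec :: "real \<Rightarrow> nat list \<Rightarrow> tvec" where
  "Svec q is = (\<lambda>js. \<Sum>p\<in>{p. p permutes {..<length is}}.
      (- mu q) ^ inversions (length is) p *
      (if js = map (\<lambda>k. is ! p k) [0..<length is] then 1 else 0))"

definition Rvec :: "real \<Rightarrow> nat list \<Rightarrow> tvec" where
  "Rvec q is = (\<lambda>js. Svec q is js /
      complex_of_real (sqrt q powr ((real (length is) - 1) / 2)
                       * sqrt (qfact q (length is - 1))))"

definition Rbar :: "real \<Rightarrow> nat list \<Rightarrow> tvec" where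
  "Rbar q is = (\<lambda>js. (-1) ^ (length is - 1) * Rvec q is js)"

definition Hbar :: "real \<Rightarrow> nat list \<Rightarrow> tvec set" where
  "Hbar q is = Eop q (length is - 1) ` tpow_sub (set is) (length is - 1)"

text \<open>(X^* (x) 1) z for X in H^(x)n: contraction of the first n tensor factors of z
against X, X^* y = <X, y>.\<close>
definition contract :: "nat \<Rightarrow> nat \<Rightarrow> tvec \<Rightarrow> tvec \<Rightarrow> tvec" where
  "contract d n X z = (\<lambda>ks. \<Sum>js\<in>words d n. cnj (X js) * z (js @ ks))"

end

theory Submission
  imports Defs "HOL-Combinatorics.Multiset_Permutations"
begin

definition agree :: "nat \<Rightarrow> tvec \<Rightarrow> tvec \<Rightarrow> bool" where
  "agree L f g \<longleftrightarrow> (\<forall>js. length js = L \<longrightarrow> f js = g js)"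

lemma gop_split:
  "gop q (Suc (length xs)) v (xs @ a # b # ys) =
    (if a = b then - v (xs @ a # b # ys)
     else - mu q * v (xs @ b # a # ys) + (if b < a then complex_of_real (q - 1) * v (xs @ a # b # ys) else 0))"
  by (simp add: gop_def Let_def nth_append list_update_append)

lemma gop_split2:
  "gop q (Suc (Suc (length xs))) v (xs @ a # b # c # ys) =
    (if b = c then - v (xs @ a # b # c # ys)
     else - mu q * v (xs @ a # c # b # ys) + (if c < b then complex_of_real (q - 1) * v (xs @ a # b # c # ys) else 0))"
  using gop_split[of q "xs @ [a]" v b c ys] by simp

lemma gop_lt: "a < b \<Longrightarrow> gop q (Suc (length xs)) v (xs @ a # b # ys) = - mu q * v (xs @ b # a # ys)"
  by (simp add: gop_split)
lemma gop_gt: "b < a \<Longrightarrow> gop q (Suc (length xs)) v (xs @ a # b # ys) =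
   - mu q * v (xs @ b # a # ys) + complex_of_real (q - 1) * v (xs @ a # b # ys)"
  by (simp add: gop_split)
lemma gop_eq: "gop q (Suc (length xs)) v (xs @ a # a # ys) = - v (xs @ a # a # ys)"
  by (simp add: gop_split)
lemma gop_lt2: "b < c \<Longrightarrow> gop q (Suc (Suc (length xs))) v (xs @ a # b # c # ys) = - mu q * v (xs @ a # c # b # ys)"
  using gop_lt[of b c q "xs @ [a]" v ys] by simp
lemma gop_gt2: "c < b \<Longrightarrow> gop q (Suc (Suc (length xs))) v (xs @ a # b # c # ys) =
   - mu q * v (xs @ a # c # b # ys) + complex_of_real (q - 1) * v (xs @ a # b # c # ys)"
  using gop_gt[of c b q "xs @ [a]" v ys] by simp
lemma gop_eq2: "gop q (Suc (Suc (length xs))) v (xs @ a # b # b # ys) = - v (xs @ a # b # b # ys)"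
  using gop_eq[of q "xs @ [a]" v b ys] by simp

lemma gop_out: "\<not> (1 \<le> i \<and> i < length js) \<Longrightarrow> gop q i v js = v js"
  unfolding gop_def by auto

lemma split_at_pos:
  assumes "1 \<le> i" "i < length js"
  obtains xs a b ys where "js = xs @ a # b # ys" "length xs = i - 1"
proof -
  have i1: "i - 1 < length js" using assms by simp
  have d: "drop (Suc (i - 1)) js = js ! i # drop (Suc i) js"
    using assms by (simp add: Cons_nth_drop_Suc)
  have "js = take (i - 1) js @ js ! (i - 1) # drop (Suc (i - 1)) js"
    using id_take_nth_drop[OF i1] .
  then have "js = take (i - 1) js @ js ! (i - 1) # js ! i # drop (Suc i) js"
    using d by simp
  moreover have "length (take (i - 1) js) = i - 1" using assms by simp
  ultimately show ?thesis using that by blast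
qed

lemma gop_agree: "agree L f g \<Longrightarrow> agree L (gop q i f) (gop q i g)"
  by (simp add: agree_def gop_def Let_def)

lemma gop_scale: "gop q i (\<lambda>js. c * v js) = (\<lambda>js. c * gop q i v js)"
  by (rule ext) (simp add: gop_def Let_def algebra_simps)

lemma gop_sum: "gop q i (\<lambda>js. \<Sum>x\<in>A. f x js) = (\<lambda>js. \<Sum>x\<in>A. gop q i (f x) js)"
proof (rule ext)
  fix js
  show "gop q i (\<lambda>js. \<Sum>x\<in>A. f x js) js = (\<Sum>x\<in>A. gop q i (f x) js)"
  proof (cases "1 \<le> i \<and> i < length js")
    case True
    then show ?thesis
      by (cases "js!(i-1) = js!i"; cases "js!i < js!(i-1)";
          simp add: gop_def Let_def sum_distrib_left sum.distrib sum_negf sum_subtractf)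
  next
    case False
    then show ?thesis by (simp add: gop_out)
  qed
qed

lemma gop_comm: "i + 2 \<le> j \<Longrightarrow> gop q i (gop q j v) = gop q j (gop q i v)"
  by (rule ext) (auto simp: gop_def Let_def nth_list_update list_update_swap algebra_simps)

lemma mu_sq: "q \<ge> 0 \<Longrightarrow> mu q * mu q = complex_of_real q"
  by (simp add: mu_def flip: of_real_mult)

lemma gop_quad:
  assumes "q \<ge> 0" "1 \<le> i" "i < L"
  shows "agree L (gop q i (gop q i v)) (\<lambda>js. complex_of_real (q-1) * gop q i v js + complex_of_real q * v js)"
  unfolding agree_def
proof (intro allI impI)
  fix js :: "nat list" assume "length js = L"
  then have "1 \<le> i" "i < length js" using assms by auto
  then obtain xs a b ys where js: "js = xs @ a # b # ys" "length xs = i - 1"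
    by (rule split_at_pos)
  have i: "i = Suc (length xs)" using js assms by simp
  have m: "complex_of_real q = mu q * mu q" "complex_of_real (q - 1) = mu q * mu q - 1"
    using mu_sq assms by simp_all
  show "gop q i (gop q i v) js = complex_of_real (q-1) * gop q i v js + complex_of_real q * v js"
    unfolding js(1) i
    by (cases rule: linorder_cases[of a b]; simp add: gop_lt gop_gt gop_eq m algebra_simps)
qed

lemma gop_braid:
  assumes "q \<ge> 0" "1 \<le> i" "i + 2 \<le> L"
  shows "agree L (gop q i (gop q (Suc i) (gop q i v))) (gop q (Suc i) (gop q i (gop q (Suc i) v)))"
  unfolding agree_def
proof (intro allI impI)
  fix js :: "nat list" assume "length js = L"
  then have "1 \<le> i" "i < length js" using assms by auto
  then obtain xs a b ys where js: "js = xs @ a # b # ys" "length xs = i - 1"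
    by (rule split_at_pos)
  have i: "i = Suc (length xs)" using js assms by simp
  obtain c zs where ys: "ys = c # zs" using js assms \<open>length js = L\<close> by (cases ys) auto
  have m: "complex_of_real q = mu q * mu q" "complex_of_real (q - 1) = mu q * mu q - 1"
    using mu_sq assms by simp_all
  show "gop q i (gop q (Suc i) (gop q i v)) js = gop q (Suc i) (gop q i (gop q (Suc i) v)) js"
    unfolding js(1) i ys
    by (cases rule: linorder_cases[of a b]; cases rule: linorder_cases[of b c];
        cases rule: linorder_cases[of a c]; (linarith |
        simp add: gop_lt gop_gt gop_eq gop_lt2 gop_gt2 gop_eq2 m algebra_simps))
qed

lemma agree_refl[simp]: "agree L f f" by (simp add: agree_def)
lemma agree_sym: "agree L f g \<Longrightarrow> agree L g f" by (simp add: agree_def)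
lemma agree_trans: "agree L f g \<Longrightarrow> agree L g h \<Longrightarrow> agree L f h" by (simp add: agree_def)
lemma agree_eq: "f = g \<Longrightarrow> agree L f g" by simp
lemma agree_scale: "agree L f g \<Longrightarrow> agree L (\<lambda>js. c * f js) (\<lambda>js. c * g js)"
  by (simp add: agree_def)

lemma gprod_scale: "gprod q s i (\<lambda>js. c * v js) = (\<lambda>js. c * gprod q s i v js)"
  by (induction i) (simp_all add: gop_scale)

lemma gprod_sum: "gprod q s i (\<lambda>js. \<Sum>x\<in>A. f x js) = (\<lambda>js. \<Sum>x\<in>A. gprod q s i (f x) js)"
  by (induction i) (simp_all add: gop_sum)

lemma gprod_agree: "agree L f g \<Longrightarrow> agree L (gprod q s i f) (gprod q s i g)"
  by (induction i) (simp_all add: gop_agree)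

lemma gprod_comm: "s + i + 2 \<le> j \<Longrightarrow> gop q j (gprod q s i v) = gprod q s i (gop q j v)"
proof (induction i)
  case 0 then show ?case by simp
next
  case (Suc i)
  have "gop q j (gprod q s (Suc i) v) = gop q j (gop q (Suc i + s) (gprod q s i v))" by simp
  also have "\<dots> = gop q (Suc i + s) (gop q j (gprod q s i v))"
    using Suc.prems by (intro gop_comm[symmetric]) simp
  also have "\<dots> = gprod q s (Suc i) (gop q j v)" using Suc by simp
  finally show ?case .
qed

lemma gprod_braid:
  assumes "q \<ge> 0" "1 \<le> k" "k < i" "s + i < L"
  shows "agree L (gop q (s + k) (gprod q s i w)) (gprod q s i (gop q (s + k + 1) w))"
  using assms(3,4)
proof (induction i)
  case 0 then show ?case by simp
next
  case (Suc i)
  show ?case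
  proof (cases "k = i")
    case True
    obtain k' where k': "k = Suc k'" using assms(2) by (cases k) auto
    have ik: "i = Suc k'" using True k' by simp
    have e1: "gprod q s (Suc i) w = gop q (s + k + 1) (gop q (s + k) (gprod q s k' w))"
      unfolding ik using k' by (simp add: add.commute)
    have "agree L (gop q (s + k) (gop q (Suc (s + k)) (gop q (s + k) (gprod q s k' w))))
                  (gop q (Suc (s + k)) (gop q (s + k) (gop q (Suc (s + k)) (gprod q s k' w))))"
      using Suc.prems True assms by (intro gop_braid) auto
    note br = this
    have cm: "gop q (Suc (s + k)) (gprod q s k' w) = gprod q s k' (gop q (Suc (s + k)) w)"
      using k' by (intro gprod_comm) simp
    have e2: "gprod q s (Suc i) (gop q (s + k + 1) w) = gop q (s + k + 1) (gop q (s + k) (gprod q s k' (gop q (s + k + 1) w)))"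
      unfolding ik using k' by (simp add: add.commute)
    show ?thesis unfolding e1 e2 using br by (simp add: cm[symmetric])
  next
    case False
    then have ki: "k < i" using Suc.prems by simp
    have "gop q (s + k) (gprod q s (Suc i) w) = gop q (Suc i + s) (gop q (s + k) (gprod q s i w))"
      using ki by (simp add: gop_comm[of "s+k" "Suc (i+s)"])
    moreover have "agree L (gop q (Suc i + s) (gop q (s + k) (gprod q s i w)))
                           (gop q (Suc i + s) (gprod q s i (gop q (s + k + 1) w)))"
      using Suc ki by (intro gop_agree) simp
    ultimately show ?thesis by simp
  qed
qed

definition eigL :: "real \<Rightarrow> nat \<Rightarrow> nat \<Rightarrow> tvec \<Rightarrow> bool" where
  "eigL q L j w \<longleftrightarrow> agree L (gop q j w) (\<lambda>js. complex_of_real q * w js)"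

lemma gprod_eigL_comm:
  assumes "eigL q L j u" "s + i + 2 \<le> j"
  shows "eigL q L j (gprod q s i u)"
proof -
  have "gop q j (gprod q s i u) = gprod q s i (gop q j u)" using assms by (simp add: gprod_comm)
  moreover have "agree L (gprod q s i (gop q j u)) (gprod q s i (\<lambda>js. complex_of_real q * u js))"
    using assms unfolding eigL_def by (intro gprod_agree)
  ultimately show ?thesis unfolding eigL_def by (simp add: gprod_scale)
qed

lemma Aop_eig:
  shows "q \<ge> 0 \<Longrightarrow> s + m \<le> L \<Longrightarrow> s + 1 \<le> j \<Longrightarrow> j + 1 \<le> s + m \<Longrightarrow> eigL q L j (Aop q m s v)"
proof (induction q m s arbitrary: j rule: Aop.induct)
  case (1 q s) then show ?case by simp
next
  case (2 q s) then show ?case by simp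
next
  case (3 q m s)
  define u where "u = Aop q (Suc m) (Suc s) v"
  define t where "t i = gprod q s i u" for i
  obtain k where k: "j = s + k" "1 \<le> k" "k \<le> Suc m" using "3.prems"
    by (metis add_le_cancel_left le_add_diff_inverse add.commute Suc_eq_plus1 add_Suc_right)
  have A: "Aop q (Suc (Suc m)) s v = (\<lambda>js. \<Sum>i\<le>Suc m. t i js)"
    by (simp add: t_def u_def)
  have IH: "eigL q L j' u" if "Suc s + 1 \<le> j'" "j' + 1 \<le> Suc s + Suc m" for j'
    unfolding u_def using "3.IH"[of 0 j'] "3.prems" that by simp
  show ?case unfolding eigL_def agree_def
  proof (intro allI impI)
    fix js :: "nat list" assume js: "length js = L"
    define d where "d = t k js - complex_of_real q * t (k - 1) js"
    have D: "gop q j (t i) js = complex_of_real q * t i js + (if i = k - 1 then d else 0) - (if i = k then d else 0)"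
      if "i \<le> Suc m" for i
    proof -
      consider "i + 2 \<le> k" | "i = k - 1" | "i = k" | "k < i" using k by linarith
      then show ?thesis
      proof cases
        case 1
        have "eigL q L j (t i)" unfolding t_def using 1 k
          by (intro gprod_eigL_comm IH) auto
        then show ?thesis using 1 js k unfolding eigL_def agree_def by auto
      next
        case 2
        obtain k' where k': "k = Suc k'" using k by (cases k) auto
        have "gop q j (t i) = t k" using 2 k' k by (simp add: t_def add.commute)
        then show ?thesis using 2 k' by (simp add: d_def)
      next
        case 3
        obtain k' where k': "k = Suc k'" using k by (cases k) auto
        have tk: "t k = gop q j (t (k - 1))" using k' k by (simp add: t_def add.commute)
        have "agree L (gop q j (gop q j (t (k-1))))
               (\<lambda>js. complex_of_real (q-1) * gop q j (t (k-1)) js + complex_of_real q * t (k-1) js)"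
          using k "3.prems" by (intro gop_quad) auto
        then have "gop q j (t k) js = complex_of_real (q-1) * t k js + complex_of_real q * t (k-1) js"
          using tk js unfolding agree_def by simp
        then show ?thesis using 3 k' by (simp add: d_def algebra_simps)
      next
        case 4
        have "agree L (gop q (s + k) (gprod q s i u)) (gprod q s i (gop q (s + k + 1) u))"
          using k 4 that "3.prems" by (intro gprod_braid) auto
        moreover have "eigL q L (s + k + 1) u" using k 4 that by (intro IH) auto
        then have "agree L (gprod q s i (gop q (s + k + 1) u)) (gprod q s i (\<lambda>js. complex_of_real q * u js))"
          unfolding eigL_def by (rule gprod_agree)
        ultimately have "gop q j (t i) js = complex_of_real q * t i js"
          using js k unfolding agree_def t_def by (simp add: gprod_scale)
        then show ?thesis using 4 by simp
      qed
    qed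
    have "gop q j (Aop q (Suc (Suc m)) s v) js = (\<Sum>i\<le>Suc m. gop q j (t i) js)"
      unfolding A gop_sum by simp
    also have "\<dots> = (\<Sum>i\<le>Suc m. complex_of_real q * t i js + (if i = k - 1 then d else 0) - (if i = k then d else 0))"
      using D by (intro sum.cong) auto
    also have "\<dots> = (\<Sum>i\<le>Suc m. complex_of_real q * t i js) + (\<Sum>i\<le>Suc m. if i = k - 1 then d else 0)
         - (\<Sum>i\<le>Suc m. if i = k then d else 0)"
      by (simp only: sum.distrib sum_subtractf)
    also have "\<dots> = complex_of_real q * (\<Sum>i\<le>Suc m. t i js)"
      using k by (simp only: sum.delta[OF finite_atMost] sum_distrib_left) simp
    finally show "gop q j (Aop q (Suc (Suc m)) s v) js = complex_of_real q * Aop q (Suc (Suc m)) s v js"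
      unfolding A by simp
  qed
qed

lemma qfact_Suc: "qfact q (Suc m) = qfact q m * (\<Sum>k<Suc m. q ^ k)"
  by (simp add: qfact_def)

lemma qfact_pos: "q > 0 \<Longrightarrow> qfact q m > 0"
  unfolding qfact_def
  by (intro prod_pos ballI sum_pos) (auto simp: lessThan_empty_iff)

lemma gprod_eig:
  "(\<forall>j. s + 1 \<le> j \<and> j \<le> s + i \<longrightarrow> eigL q L j v) \<Longrightarrow>
    agree L (gprod q s i v) (\<lambda>js. complex_of_real q ^ i * v js)"
proof (induction i)
  case 0 then show ?case by simp
next
  case (Suc i)
  have "agree L (gop q (Suc i + s) (gprod q s i v)) (gop q (Suc i + s) (\<lambda>js. complex_of_real q ^ i * v js))"
    using Suc by (intro gop_agree) simp
  moreover have "agree L (\<lambda>js. complex_of_real q ^ i * gop q (Suc i + s) v js)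
                         (\<lambda>js. complex_of_real q ^ i * (complex_of_real q * v js))"
    using Suc.prems unfolding eigL_def by (intro agree_scale) (simp add: add.commute)
  ultimately show ?case by (simp add: gop_scale agree_def mult.assoc)
qed

lemma Aop_fix:
  "s + m \<le> L \<Longrightarrow> (\<forall>j. s + 1 \<le> j \<and> j + 1 \<le> s + m \<longrightarrow> eigL q L j v) \<Longrightarrow>
    agree L (Aop q m s v) (\<lambda>js. complex_of_real (qfact q m) * v js)"
proof (induction q m s rule: Aop.induct)
  case (1 q s) then show ?case by (simp add: qfact_def)
next
  case (2 q s) then show ?case by (simp add: qfact_def)
next
  case (3 q m s)
  define u where "u = Aop q (Suc m) (Suc s) v"
  have IH: "agree L u (\<lambda>js. complex_of_real (qfact q (Suc m)) * v js)"
    unfolding u_def using "3.IH"[of 0] "3.prems" by simp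
  show ?case unfolding agree_def
  proof (intro allI impI)
    fix js :: "nat list" assume js: "length js = L"
    have g: "gprod q s i u js = complex_of_real (qfact q (Suc m)) * (complex_of_real q ^ i * v js)"
      if "i \<le> Suc m" for i
    proof -
      have "agree L (gprod q s i u) (gprod q s i (\<lambda>js. complex_of_real (qfact q (Suc m)) * v js))"
        using IH by (rule gprod_agree)
      moreover have "agree L (gprod q s i v) (\<lambda>js. complex_of_real q ^ i * v js)"
        using "3.prems" that by (intro gprod_eig) auto
      ultimately show ?thesis using js unfolding agree_def by (simp add: gprod_scale)
    qed
    have "Aop q (Suc (Suc m)) s v js = (\<Sum>i\<le>Suc m. gprod q s i u js)"
      by (simp add: u_def)
    also have "\<dots> = (\<Sum>i\<le>Suc m. complex_of_real (qfact q (Suc m)) * (complex_of_real q ^ i * v js))"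
      using g by (intro sum.cong) auto
    also have "\<dots> = complex_of_real (qfact q (Suc m)) * (\<Sum>i\<le>Suc m. complex_of_real q ^ i) * v js"
      by (simp add: sum_distrib_left sum_distrib_right mult.assoc del: sum.atMost_Suc)
    also have "(\<Sum>i\<le>Suc m. complex_of_real q ^ i) = complex_of_real (\<Sum>k<Suc (Suc m). q ^ k)"
      by (simp only: lessThan_Suc_atMost of_real_sum of_real_power)
    also have "complex_of_real (qfact q (Suc m)) * complex_of_real (\<Sum>k<Suc (Suc m). q ^ k) * v js
        = complex_of_real (qfact q (Suc m) * (\<Sum>k<Suc (Suc m). q ^ k)) * v js"
      by simp
    also have "\<dots> = complex_of_real (qfact q (Suc (Suc m))) * v js"
      by (simp only: qfact_Suc[of q "Suc m"])
    finally show "Aop q (Suc (Suc m)) s v js = complex_of_real (qfact q (Suc (Suc m))) * v js" .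
  qed
qed

lemma gop_tpow: "v \<in> tpow_sub I L \<Longrightarrow> gop q i v \<in> tpow_sub I L"
  unfolding tpow_sub_def
proof (safe)
  fix js assume v: "\<forall>js. v js \<noteq> 0 \<longrightarrow> length js = L \<and> set js \<subseteq> I" and g: "gop q i v js \<noteq> 0"
  have "length js = L \<and> set js \<subseteq> I"
  proof (cases "1 \<le> i \<and> i < length js")
    case True
    then obtain xs a b ys where js: "js = xs @ a # b # ys" "length xs = i - 1"
      using split_at_pos by blast
    have i: "i = Suc (length xs)" using js True by simp
    have "v (xs @ a # b # ys) \<noteq> 0 \<or> v (xs @ b # a # ys) \<noteq> 0"
      using g unfolding js(1) i gop_split by (auto split: if_splits)
    then show ?thesis
    proof
      assume "v (xs @ a # b # ys) \<noteq> 0"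
      then show ?thesis using v js(1) by blast
    next
      assume "v (xs @ b # a # ys) \<noteq> 0"
      then have "length (xs @ b # a # ys) = L \<and> set (xs @ b # a # ys) \<subseteq> I" using v by blast
      then show ?thesis unfolding js(1) by auto
    qed
  next
    case False
    then show ?thesis using g v by (simp add: gop_out)
  qed
  then show "length js = L" "\<And>x. x \<in> set js \<Longrightarrow> x \<in> I" by auto
qed

lemma tpow_scale: "v \<in> tpow_sub I L \<Longrightarrow> (\<lambda>js. c * v js) \<in> tpow_sub I L"
  unfolding tpow_sub_def by auto

lemma tpow_sum: "(\<And>x. x \<in> A \<Longrightarrow> f x \<in> tpow_sub I L) \<Longrightarrow> (\<lambda>js. \<Sum>x\<in>A. f x js) \<in> tpow_sub I L"
  unfolding tpow_sub_def
proof (safe)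
  fix js assume f: "\<And>x. x \<in> A \<Longrightarrow> f x \<in> {v. \<forall>js. v js \<noteq> 0 \<longrightarrow> length js = L \<and> set js \<subseteq> I}"
    and s: "(\<Sum>x\<in>A. f x js) \<noteq> 0"
  then obtain x where x: "x \<in> A" "f x js \<noteq> 0" by (meson sum.neutral)
  then show "length js = L" using f by blast
  show "\<And>y. y \<in> set js \<Longrightarrow> y \<in> I" using f x by blast
qed

lemma gprod_tpow: "v \<in> tpow_sub I L \<Longrightarrow> gprod q s i v \<in> tpow_sub I L"
  by (induction i) (simp_all add: gop_tpow)

lemma Aop_tpow: "v \<in> tpow_sub I L \<Longrightarrow> Aop q m s v \<in> tpow_sub I L"
proof (induction q m s rule: Aop.induct)
  case (3 q m s)
  have "Aop q (Suc m) (Suc s) v \<in> tpow_sub I L" using "3.IH"[of 0] "3.prems" by simp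
  then show ?case by (simp only: Aop.simps) (intro tpow_sum gprod_tpow)
qed simp_all

lemma tpow_zero: "v \<in> tpow_sub I L \<Longrightarrow> length js \<noteq> L \<Longrightarrow> v js = 0"
  unfolding tpow_sub_def by auto

lemma gop_zero_sector: "v \<in> tpow_sub I L \<Longrightarrow> length js \<noteq> L \<Longrightarrow> gop q j v js = 0"
  using gop_tpow tpow_zero by blast

definition Eig :: "real \<Rightarrow> tvec \<Rightarrow> bool" where
  "Eig q y \<longleftrightarrow> (\<forall>j js. 1 \<le> j \<longrightarrow> j < length js \<longrightarrow> gop q j y js = complex_of_real q * y js)"

lemma Eop_alt: "Eop q m v = (\<lambda>js. inverse (complex_of_real (qfact q m)) * Aop q m 0 v js)"
  by (simp add: Eop_def field_simps)

lemma Hbar_props: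
  assumes "q > 0" "y \<in> Eop q L ` tpow_sub I L"
  shows "y \<in> tpow_sub I L" "Eig q y"
proof -
  obtain v where v: "v \<in> tpow_sub I L" "y = Eop q L v" using assms by auto
  define c where "c = inverse (complex_of_real (qfact q L))"
  have y: "y = (\<lambda>js. c * Aop q L 0 v js)" using v by (simp add: Eop_alt c_def)
  have A: "Aop q L 0 v \<in> tpow_sub I L" using v(1) by (rule Aop_tpow)
  then show "y \<in> tpow_sub I L" unfolding y by (rule tpow_scale)
  show "Eig q y" unfolding Eig_def
  proof (intro allI impI)
    fix j js assume j: "1 \<le> (j::nat)" "j < length (js::nat list)"
    show "gop q j y js = complex_of_real q * y js"
    proof (cases "length js = L")
      case True
      have "eigL q L j (Aop q L 0 v)" using assms j True by (intro Aop_eig) auto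
      then show ?thesis using True unfolding y eigL_def agree_def gop_scale by simp
    next
      case False
      then show ?thesis using A unfolding y gop_scale by (simp add: gop_zero_sector tpow_zero)
    qed
  qed
qed

lemma Hbar_intro:
  assumes "q > 0" "v \<in> tpow_sub I L" "Eig q v"
  shows "v \<in> Eop q L ` tpow_sub I L"
proof -
  have "Eop q L v = v"
  proof
    fix js :: "nat list"
    show "Eop q L v js = v js"
    proof (cases "length js = L")
      case True
      have "agree L (Aop q L 0 v) (\<lambda>js. complex_of_real (qfact q L) * v js)"
        by (rule Aop_fix) (use assms in \<open>auto simp: Eig_def eigL_def agree_def\<close>)
      then show ?thesis using True qfact_pos[OF assms(1), of L] unfolding agree_def Eop_def by simp
    next
      case False
      have "Aop q L 0 v js = 0" by (rule tpow_zero[OF Aop_tpow[OF assms(2)] False])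
      moreover have "v js = 0" by (rule tpow_zero[OF assms(2) False])
      ultimately show ?thesis unfolding Eop_def by simp
    qed
  qed
  then show ?thesis using assms by (metis image_eqI)
qed

fun invl :: "nat list \<Rightarrow> nat" where
  "invl [] = 0"
| "invl (x # xs) = length (filter (\<lambda>y. y < x) xs) + invl xs"

lemma invl_swap: "a < b \<Longrightarrow> invl (xs @ b # a # ys) = Suc (invl (xs @ a # b # ys))"
  by (induction xs) auto

lemma invl_snoc: "invl (xs @ [x]) = invl xs + length (filter (\<lambda>y. x < y) xs)"
  by (induction xs) auto

lemma sorted_invl: "sorted xs \<Longrightarrow> invl xs = 0"
  by (induction xs) (auto simp: filter_empty_conv not_less)

lemma unsorted_descent: "\<not> sorted xs \<Longrightarrow> \<exists>as a b bs. xs = as @ a # b # bs \<and> b < a"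
proof (induction xs)
  case Nil then show ?case by simp
next
  case (Cons x xs)
  show ?case
  proof (cases "sorted xs")
    case False
    then obtain as a b bs where "xs = as @ a # b # bs" "b < a" using Cons.IH by blast
    then show ?thesis by (intro exI[of _ "x # as"]) auto
  next
    case True
    then obtain y zs where xs: "xs = y # zs" using Cons.prems by (cases xs) auto
    have "y < x" using Cons.prems True xs by auto
    then show ?thesis using xs by (intro exI[of _ "[]"]) auto
  qed
qed

lemma sorted_nondistinct: "sorted xs \<Longrightarrow> \<not> distinct xs \<Longrightarrow> \<exists>as a bs. xs = as @ a # a # bs"
proof (induction xs)
  case Nil then show ?case by simp
next
  case (Cons x xs)
  show ?case
  proof (cases "distinct xs")
    case False
    then obtain as a bs where "xs = as @ a # a # bs" using Cons by auto
    then show ?thesis by (intro exI[of _ "x # as"]) auto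
  next
    case True
    then have "x \<in> set xs" using Cons.prems by auto
    then obtain y zs where xs: "xs = y # zs" by (cases xs) auto
    have "x = y" using Cons.prems \<open>x \<in> set xs\<close> xs by (auto intro: antisym)
    then show ?thesis using xs by (intro exI[of _ "[]"]) auto
  qed
qed

lemma sorted_distinct_eq: "sorted xs \<Longrightarrow> distinct xs \<Longrightarrow> sorted_list_of_set (set xs) = xs"
  by (simp add: sorted_list_of_set_sort_remdups distinct_remdups_id sorted_sort_id)

lemma mu_nz: "q > 0 \<Longrightarrow> mu q \<noteq> 0"
  by (simp add: mu_def)

lemma Eig_antisym:
  assumes "q > 0" "Eig q y"
  shows "y ks = (if distinct ks then (- mu q) ^ invl ks * y (sorted_list_of_set (set ks)) else 0)"
proof (induction "invl ks" arbitrary: ks rule: less_induct)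
  case less
  have m: "complex_of_real q = mu q * mu q" using mu_sq assms by simp
  show ?case
  proof (cases "sorted ks")
    case True
    show ?thesis
    proof (cases "distinct ks")
      case True
      then show ?thesis using \<open>sorted ks\<close> by (simp add: sorted_invl sorted_distinct_eq)
    next
      case False
      then obtain as a bs where ks: "ks = as @ a # a # bs" using sorted_nondistinct \<open>sorted ks\<close> by blast
      have "gop q (Suc (length as)) y ks = complex_of_real q * y ks"
        using assms(2) unfolding Eig_def ks by simp
      then have h: "- y ks = complex_of_real q * y ks" unfolding ks gop_eq .
      have "(complex_of_real q + 1) * y ks = complex_of_real q * y ks + y ks" by (simp add: algebra_simps)
      also have "\<dots> = 0" unfolding h[symmetric] by simp
      finally have "(complex_of_real q + 1) * y ks = 0" .
      moreover have "complex_of_real q + 1 \<noteq> 0"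
        using assms(1) by (metis add_pos_pos of_real_1 of_real_add of_real_eq_0_iff zero_less_one less_irrefl)
      ultimately show ?thesis using False by simp
    qed
  next
    case False
    then obtain as a b bs where ks: "ks = as @ a # b # bs" "b < a" using unsorted_descent by blast
    define ks' where "ks' = as @ b # a # bs"
    have inv: "invl ks = Suc (invl ks')" unfolding ks ks'_def using invl_swap[OF ks(2)] by simp
    have IH: "y ks' = (if distinct ks' then (- mu q) ^ invl ks' * y (sorted_list_of_set (set ks')) else 0)"
      using less inv by simp
    have "gop q (Suc (length as)) y ks' = complex_of_real q * y ks'"
      using assms(2) unfolding Eig_def ks'_def by simp
    then have "- mu q * y ks = mu q * mu q * y ks'"
      unfolding ks'_def ks(1) using gop_lt[OF ks(2)] m by simp
    then have h2: "mu q * (mu q * y ks') = - (mu q * y ks)" by (simp add: mult.assoc)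
    have "mu q * (y ks + mu q * y ks') = mu q * y ks + mu q * (mu q * y ks')" by (simp add: distrib_left)
    also have "\<dots> = 0" unfolding h2 by simp
    finally have "mu q * (y ks + mu q * y ks') = 0" .
    then have "y ks + mu q * y ks' = 0" using mu_nz[OF assms(1)] by simp
    then have "y ks = - (mu q * y ks')" by (simp add: eq_neg_iff_add_eq_0)
    then have yk: "y ks = - mu q * y ks'" by simp
    have sd: "distinct ks' = distinct ks" "set ks' = set ks" unfolding ks ks'_def by auto
    show ?thesis unfolding yk IH inv sd by simp
  qed
qed

lemma invl_card: "invl js = card {(a, b). a < b \<and> b < length js \<and> js ! b < js ! a}"
proof (induction js)
  case Nil then show ?case by simp
next
  case (Cons x xs)
  define S where "S = {(a, b). a < b \<and> b < length xs \<and> xs ! b < xs ! a}"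
  define A where "A = (\<lambda>b. (0::nat, Suc b)) ` {b. b < length xs \<and> xs ! b < x}"
  define B where "B = map_prod Suc Suc ` S"
  have eq: "{(a, b). a < b \<and> b < length (x # xs) \<and> (x # xs) ! b < (x # xs) ! a} = A \<union> B"
  proof (rule set_eqI)
    fix p :: "nat \<times> nat"
    obtain a b where p: "p = (a, b)" by (cases p)
    show "p \<in> {(a, b). a < b \<and> b < length (x # xs) \<and> (x # xs) ! b < (x # xs) ! a} \<longleftrightarrow> p \<in> A \<union> B"
      unfolding p A_def B_def S_def
      by (cases a; cases b) (auto simp: map_prod_def image_iff)
  qed
  have fS: "finite S" unfolding S_def
    by (rule finite_subset[of _ "{..<length xs} \<times> {..<length xs}"]) auto
  have cA: "card A = length (filter (\<lambda>y. y < x) xs)"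
    unfolding A_def by (subst card_image) (auto simp: inj_on_def length_filter_conv_card)
  have cB: "card B = card S" unfolding B_def
    by (rule card_image) (auto simp: inj_on_def)
  have "card (A \<union> B) = card A + card B"
    by (rule card_Un_disjoint) (auto simp: A_def B_def fS)
  then show ?case using eq cA cB Cons.IH S_def by simp
qed

lemma strict_nth_less_iff:
  fixes xs :: "nat list"
  assumes "sorted_wrt (<) xs" "i < length xs" "j < length xs"
  shows "xs ! i < xs ! j \<longleftrightarrow> i < j"
proof
  assume h: "xs ! i < xs ! j"
  show "i < j"
  proof (rule ccontr)
    assume "\<not> i < j"
    then have "j < i \<or> j = i" by auto
    then show False using h sorted_wrt_nth_less[OF assms(1), of j i] assms by auto
  qed
qed (use sorted_wrt_nth_less[OF assms(1)] assms in auto)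

definition Pv :: "real \<Rightarrow> nat set \<Rightarrow> tvec" where
  "Pv q I js = (if js \<in> permutations_of_set I then (- mu q) ^ invl js else 0)"

lemma Svec_closed:
  assumes "sorted_wrt (<) is"
  shows "Svec q is = Pv q (set is)"
proof
  fix js
  define n where "n = length is"
  define P where "P = {p. p permutes {..<n}}"
  define g where "g p = map (\<lambda>k. is ! p k) [0..<n]" for p
  have dist: "distinct is" using assms strict_sorted_iff by blast
  have setis: "set is = (!) is ` {..<n}" unfolding n_def by (auto simp: set_conv_nth)
  have injis: "inj_on ((!) is) {..<n}" using dist unfolding n_def by (simp add: inj_on_nth)
  have gP: "g p \<in> permutations_of_set (set is)" if "p \<in> P" for p
  proof -
    have pp: "p permutes {..<n}" using that P_def by simp
    have "map p [0..<n] \<in> permutations_of_set {..<n}"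
    proof
      show "set (map p [0..<n]) = {..<n}" using permutes_image[OF pp] by (simp add: atLeast0LessThan)
      show "distinct (map p [0..<n])" using permutes_inj[OF pp]
        by (auto simp: distinct_map inj_on_def)
    qed
    then have "map ((!) is) (map p [0..<n]) \<in> permutations_of_set (set is)"
      unfolding setis permutations_of_set_image_inj[OF injis] by blast
    then show ?thesis unfolding g_def by (simp add: comp_def)
  qed
  have ginj: "p = p'" if "p \<in> P" "p' \<in> P" "g p = g p'" for p p'
  proof
    fix k
    have pp: "p permutes {..<n}" "p' permutes {..<n}" using that P_def by auto
    show "p k = p' k"
    proof (cases "k < n")
      case True
      have "is ! p k = is ! p' k" using that(3) True unfolding g_def
        by (metis (no_types, lifting) add_0 diff_zero length_map length_upt nth_map nth_upt)
      moreover have "p k < n" "p' k < n" using permutes_in_image[OF pp(1)] permutes_in_image[OF pp(2)] True by auto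
      ultimately show ?thesis using dist unfolding n_def by (simp add: nth_eq_iff_index_eq)
    next
      case False
      then show ?thesis using permutes_not_in[OF pp(1)] permutes_not_in[OF pp(2)] by simp
    qed
  qed
  have gsurj: "\<exists>p\<in>P. g p = js" if hjs: "js \<in> permutations_of_set (set is)"
  proof -
    have "js \<in> map ((!) is) ` permutations_of_set {..<n}"
      using hjs unfolding setis permutations_of_set_image_inj[OF injis] .
    then obtain \<tau> where tau: "\<tau> \<in> permutations_of_set {..<n}" "js = map ((!) is) \<tau>"
      by (rule imageE)
    have lt: "length \<tau> = n" using length_finite_permutations_of_set[OF tau(1)] by simp
    have dt: "distinct \<tau>" "set \<tau> = {..<n}" using tau(1) by (auto simp: permutations_of_set_def)
    define p where "p k = (if k < n then \<tau> ! k else k)" for k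
    have "bij_betw ((!) \<tau>) {..<length \<tau>} (set \<tau>)" by (rule bij_betw_nth[OF dt(1) refl refl])
    then have b1: "bij_betw ((!) \<tau>) {..<n} {..<n}" unfolding lt dt(2) .
    have "bij_betw p {..<n} {..<n} = bij_betw ((!) \<tau>) {..<n} {..<n}"
      by (rule bij_betw_cong) (simp add: p_def)
    then have "bij_betw p {..<n} {..<n}" using b1 by simp
    then have "p permutes {..<n}" by (rule bij_imp_permutes) (simp add: p_def)
    moreover have "g p = js" unfolding g_def tau(2) p_def
      by (rule nth_equalityI) (auto simp: lt)
    ultimately show ?thesis unfolding P_def by blast
  qed
  have ginv: "inversions n p = invl (g p)" if "p \<in> P" for p
  proof -
    have pp: "p permutes {..<n}" using that P_def by simp
    have "{(a, b). a < b \<and> b < n \<and> p b < p a} = {(a, b). a < b \<and> b < length (g p) \<and> g p ! b < g p ! a}"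
    proof (rule set_eqI)
      fix x :: "nat \<times> nat"
      obtain a b where x: "x = (a, b)" by (cases x)
      have "a < b \<Longrightarrow> b < n \<Longrightarrow> (p b < p a \<longleftrightarrow> is ! p b < is ! p a)"
        using strict_nth_less_iff[OF assms, of "p b" "p a"] permutes_in_image[OF pp, of a]
          permutes_in_image[OF pp, of b] unfolding n_def by auto
      then show "x \<in> {(a, b). a < b \<and> b < n \<and> p b < p a} \<longleftrightarrow> x \<in> {(a, b). a < b \<and> b < length (g p) \<and> g p ! b < g p ! a}"
        unfolding x g_def by auto
    qed
    then show ?thesis unfolding inversions_def invl_card by simp
  qed
  have fP: "finite P" unfolding P_def by (simp add: finite_permutations)
  have S: "Svec q is js = (\<Sum>p\<in>P. (- mu q) ^ inversions n p * (if js = g p then 1 else 0))"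
    unfolding Svec_def P_def g_def n_def by simp
  show "Svec q is js = Pv q (set is) js"
  proof (cases "js \<in> permutations_of_set (set is)")
    case False
    then have "\<forall>p\<in>P. js \<noteq> g p" using gP by blast
    then show ?thesis using False unfolding S Pv_def by simp
  next
    case True
    then obtain p0 where p0: "p0 \<in> P" "g p0 = js" using gsurj by blast
    have "Svec q is js = (\<Sum>p\<in>P. if p = p0 then (- mu q) ^ inversions n p0 else 0)"
      unfolding S using p0 ginj by (intro sum.cong) auto
    also have "\<dots> = (- mu q) ^ inversions n p0" using fP p0 by simp
    finally show ?thesis using True p0 ginv unfolding Pv_def by simp
  qed
qed

lemma Pv_eig:
  assumes "q \<ge> 0" "1 \<le> j" "j < length js"
  shows "gop q j (Pv q I) js = complex_of_real q * Pv q I js"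
proof -
  obtain xs a b ys where js: "js = xs @ a # b # ys" "length xs = j - 1"
    using split_at_pos assms(2,3) by blast
  have j: "j = Suc (length xs)" using js assms by simp
  have m: "complex_of_real q = mu q * mu q" "complex_of_real (q - 1) = mu q * mu q - 1"
    using mu_sq assms by simp_all
  have mem: "xs @ b # a # ys \<in> permutations_of_set I \<longleftrightarrow> xs @ a # b # ys \<in> permutations_of_set I"
    by (auto simp: permutations_of_set_def insert_commute)
  show ?thesis
    unfolding js(1) j
  proof (cases rule: linorder_cases[of a b])
    case less
    then show "gop q (Suc (length xs)) (Pv q I) (xs @ a # b # ys) = complex_of_real q * Pv q I (xs @ a # b # ys)"
      using mem invl_swap[OF less, of xs ys] m by (simp add: gop_lt Pv_def algebra_simps)
  next
    case equal
    then show "gop q (Suc (length xs)) (Pv q I) (xs @ a # b # ys) = complex_of_real q * Pv q I (xs @ a # b # ys)"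
      by (simp add: gop_eq Pv_def permutations_of_set_def)
  next
    case greater
    then show "gop q (Suc (length xs)) (Pv q I) (xs @ a # b # ys) = complex_of_real q * Pv q I (xs @ a # b # ys)"
      using mem invl_swap[OF greater, of xs ys] m by (simp add: gop_gt Pv_def algebra_simps)
  qed
qed

lemma rank_sum: "finite (A::nat set) \<Longrightarrow> (\<Sum>x\<in>A. f (card {y\<in>A. y < x})) = (\<Sum>k<card A. f k)"
proof (induction "card A" arbitrary: A)
  case 0 then show ?case by simp
next
  case (Suc m)
  then have ne: "A \<noteq> {}" by auto
  define M where "M = Max A"
  define B where "B = A - {M}"
  have MA: "M \<in> A" using Suc.prems ne M_def by simp
  have cB: "card B = m" using Suc.hyps MA B_def Suc.prems by simp
  have fB: "finite B" using Suc.prems B_def by simp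
  have s1: "{y\<in>A. y < M} = B" unfolding B_def M_def using Suc.prems
    by (auto simp: order.not_eq_order_implies_strict)
  have s2: "{y\<in>A. y < x} = {y\<in>B. y < x}" if "x \<in> B" for x
    using that Suc.prems unfolding B_def M_def by (auto dest: Max_ge[OF Suc.prems])
  have "(\<Sum>x\<in>A. f (card {y\<in>A. y < x})) = f (card {y\<in>A. y < M}) + (\<Sum>x\<in>B. f (card {y\<in>A. y < x}))"
    unfolding B_def using Suc.prems MA by (simp add: sum.remove)
  also have "\<dots> = f m + (\<Sum>x\<in>B. f (card {y\<in>B. y < x}))" using s1 s2 cB by simp
  also have "\<dots> = f m + (\<Sum>k<m. f k)" using Suc.hyps(1)[of B] cB fB by simp
  finally show ?case using Suc.hyps(2)[symmetric] by (simp add: add.commute)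
qed

lemma mahonian: "finite A \<Longrightarrow> (\<Sum>\<sigma>\<in>permutations_of_set A. q ^ invl \<sigma>) = qfact q (card A)"
proof (induction "card A" arbitrary: A)
  case 0
  then have "A = {}" by simp
  then show ?case by (simp add: qfact_def)
next
  case (Suc m)
  then have ne: "A \<noteq> {}" by auto
  have fin: "finite (permutations_of_set (A - {x}))" for x by simp
  have disj: "\<forall>x\<in>A. \<forall>y\<in>A. x \<noteq> y \<longrightarrow> ((#) x ` permutations_of_set (A - {x})) \<inter> ((#) y ` permutations_of_set (A - {y})) = {}"
    by auto
  have inner: "(\<Sum>\<sigma>\<in>(#) x ` permutations_of_set (A - {x}). q ^ invl \<sigma>) = q ^ card {y\<in>A. y < x} * qfact q m"
    if "x \<in> A" for x
  proof -
    have "(\<Sum>\<sigma>\<in>(#) x ` permutations_of_set (A - {x}). q ^ invl \<sigma>)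
        = (\<Sum>\<tau>\<in>permutations_of_set (A - {x}). q ^ invl (x # \<tau>))"
      by (subst sum.reindex) (auto simp: inj_on_def)
    also have "\<dots> = (\<Sum>\<tau>\<in>permutations_of_set (A - {x}). q ^ card {y\<in>A. y < x} * q ^ invl \<tau>)"
    proof (rule sum.cong)
      fix \<tau> assume t: "\<tau> \<in> permutations_of_set (A - {x})"
      then have "length (filter (\<lambda>y. y < x) \<tau>) = card {y\<in>A. y < x}"
        by (auto simp: permutations_of_set_def distinct_length_filter intro: arg_cong[where f = card])
      then show "q ^ invl (x # \<tau>) = q ^ card {y\<in>A. y < x} * q ^ invl \<tau>" by (simp add: power_add)
    qed simp
    also have "\<dots> = q ^ card {y\<in>A. y < x} * qfact q m"
      using Suc.hyps(1)[of "A - {x}"] Suc.hyps(2)[symmetric] Suc.prems that by (simp add: sum_distrib_left[symmetric])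
    finally show ?thesis .
  qed
  have "(\<Sum>\<sigma>\<in>permutations_of_set A. q ^ invl \<sigma>) = (\<Sum>x\<in>A. \<Sum>\<sigma>\<in>(#) x ` permutations_of_set (A - {x}). q ^ invl \<sigma>)"
    unfolding permutations_of_set_nonempty[OF ne]
    by (rule sum.UNION_disjoint) (use Suc.prems disj in auto)
  also have "\<dots> = (\<Sum>x\<in>A. q ^ card {y\<in>A. y < x}) * qfact q m"
    using inner by (simp add: sum_distrib_right)
  also have "\<dots> = (\<Sum>k<Suc m. q ^ k) * qfact q m"
    using rank_sum[OF Suc.prems, of "\<lambda>k. q ^ k"] Suc.hyps(2) by simp
  finally show ?case using Suc.hyps(2)[symmetric] by (simp add: qfact_Suc mult.commute)
qed

lemma cspan_sum:
  assumes "finite K" "\<And>k. k \<in> K \<Longrightarrow> f k \<in> S"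
  shows "(\<lambda>js. \<Sum>k\<in>K. c k * f k js) \<in> cspan S"
  using assms
proof (induction K rule: finite_induct)
  case empty
  show ?case unfolding cspan_def by (intro CollectI exI[of _ "{}"]) simp
next
  case (insert k K)
  obtain F c' where F: "finite F" "F \<subseteq> S" "(\<lambda>js. \<Sum>k\<in>K. c k * f k js) = (\<lambda>js. \<Sum>v\<in>F. c' v * v js)"
    using insert by (auto simp: cspan_def)
  define F' where "F' = insert (f k) F"
  define c'' where "c'' v = (if v \<in> F then c' v else 0) + (if v = f k then c k else 0)" for v
  have "(\<lambda>js. \<Sum>k\<in>insert k K. c k * f k js) = (\<lambda>js. \<Sum>v\<in>F'. c'' v * v js)"
  proof
    fix js
    have a: "(\<Sum>v\<in>F'. (if v \<in> F then c' v else 0) * v js) = (\<Sum>v\<in>F. c' v * v js)"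
    proof (cases "f k \<in> F")
      case True
      then show ?thesis unfolding F'_def by (simp add: insert_absorb)
    next
      case False
      then have "(\<Sum>v\<in>F'. (if v \<in> F then c' v else 0) * v js) = (\<Sum>v\<in>F. (if v \<in> F then c' v else 0) * v js)"
        unfolding F'_def using F(1) by simp
      also have "\<dots> = (\<Sum>v\<in>F. c' v * v js)" by (rule sum.cong) auto
      finally show ?thesis .
    qed
    have b: "(\<Sum>v\<in>F'. (if v = f k then c k else 0) * v js) = c k * f k js"
    proof -
      have "(\<Sum>v\<in>F'. (if v = f k then c k else 0) * v js) = (\<Sum>v\<in>F'. if v = f k then c k * f k js else 0)"
        by (rule sum.cong) auto
      also have "\<dots> = c k * f k js" using F(1) unfolding F'_def by simp
      finally show ?thesis .
    qed
    have "(\<Sum>v\<in>F'. c'' v * v js) = (\<Sum>v\<in>F'. (if v \<in> F then c' v else 0) * v js + (if v = f k then c k else 0) * v js)"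
      unfolding c''_def by (simp add: distrib_right)
    also have "\<dots> = (\<Sum>v\<in>F. c' v * v js) + c k * f k js" unfolding sum.distrib a b ..
    also have "\<dots> = (\<Sum>k\<in>K. c k * f k js) + c k * f k js" using F(3) by metis
    also have "\<dots> = (\<Sum>k\<in>insert k K. c k * f k js)" using insert by (simp add: add.commute)
    finally show "(\<Sum>k\<in>insert k K. c k * f k js) = (\<Sum>v\<in>F'. c'' v * v js)" by simp
  qed
  moreover have "finite F'" "F' \<subseteq> S" using F insert unfolding F'_def by auto
  ultimately show ?case unfolding cspan_def by blast
qed

lemma gop_snoc:
  assumes "1 \<le> j" "j < length \<sigma>"
  shows "gop q j (\<lambda>\<sigma>. v (\<sigma> @ [k])) \<sigma> = gop q j v (\<sigma> @ [k])"
proof -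
  obtain xs a b ys where s: "\<sigma> = xs @ a # b # ys" "length xs = j - 1"
    using split_at_pos assms by blast
  have j: "j = Suc (length xs)" using s assms by simp
  show ?thesis unfolding s(1) j using gop_split[of q xs v a b "ys @ [k]"] by (simp add: gop_split)
qed

lemma gop_cons:
  assumes "1 \<le> j" "j < length \<sigma>"
  shows "gop q j (\<lambda>\<sigma>. v (k # \<sigma>)) \<sigma> = gop q (Suc j) v (k # \<sigma>)"
proof -
  obtain xs a b ys where s: "\<sigma> = xs @ a # b # ys" "length xs = j - 1"
    using split_at_pos assms by blast
  have j: "j = Suc (length xs)" using s assms by simp
  show ?thesis unfolding s(1) j using gop_split[of q "k # xs" v a b ys] by (simp add: gop_split)
qed

lemma Pv_nz: "Pv q I js \<noteq> 0 \<Longrightarrow> js \<in> permutations_of_set I"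
  by (auto simp: Pv_def split: if_splits)

lemma Pv_in: "js \<in> permutations_of_set I \<Longrightarrow> Pv q I js = (- mu q) ^ invl js"
  by (simp add: Pv_def)

lemma cnj_Pv: "cnj (Pv q I js) = Pv q I js"
  by (simp add: Pv_def mu_def)

lemma Eig_snoc: "q \<ge> 0 \<Longrightarrow> Eig q (\<lambda>\<sigma>. Pv q I (\<sigma> @ [k]))"
  unfolding Eig_def by (auto simp: gop_snoc Pv_eig)

lemma Eig_cons: "q \<ge> 0 \<Longrightarrow> Eig q (\<lambda>\<sigma>. Pv q I (k # \<sigma>))"
  unfolding Eig_def by (auto simp: gop_cons Pv_eig)

lemma perm_len: "finite I \<Longrightarrow> js \<in> permutations_of_set I \<Longrightarrow> length js = card I"
  by (rule length_finite_permutations_of_set)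

lemma tpow_snoc:
  assumes "finite I" "card I = n" "n \<ge> 1"
  shows "(\<lambda>\<sigma>. Pv q I (\<sigma> @ [k])) \<in> tpow_sub I (n - 1)"
  unfolding tpow_sub_def
proof (safe)
  fix \<sigma> assume "Pv q I (\<sigma> @ [k]) \<noteq> 0"
  then have p: "\<sigma> @ [k] \<in> permutations_of_set I" by (rule Pv_nz)
  then show "length \<sigma> = n - 1" using perm_len[OF assms(1) p] assms by simp
  fix x assume "x \<in> set \<sigma>" then show "x \<in> I" using p by (auto simp: permutations_of_set_def)
qed

lemma tpow_cons:
  assumes "finite I" "card I = n" "n \<ge> 1"
  shows "(\<lambda>\<sigma>. Pv q I (k # \<sigma>)) \<in> tpow_sub I (n - 1)"
  unfolding tpow_sub_def
proof (safe)
  fix \<sigma> assume "Pv q I (k # \<sigma>) \<noteq> 0"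
  then have p: "k # \<sigma> \<in> permutations_of_set I" by (rule Pv_nz)
  then show "length \<sigma> = n - 1" using perm_len[OF assms(1) p] assms by simp
  fix x assume "x \<in> set \<sigma>" then show "x \<in> I" using p by (auto simp: permutations_of_set_def)
qed

lemma tpow_e: "k \<in> I \<Longrightarrow> (\<lambda>js. if js = [k] then 1 else 0) \<in> tpow_sub I 1"
  unfolding tpow_sub_def by auto

lemma pw: "q \<ge> 0 \<Longrightarrow> (- mu q) ^ i * (- mu q) ^ i = complex_of_real q ^ i"
  by (simp add: power_mult_distrib[symmetric] mu_sq)

lemma filt: "(k::nat) \<notin> set \<tau> \<Longrightarrow> length (filter (\<lambda>y. y < k) \<tau>) + length (filter (\<lambda>y. k < y) \<tau>) = length \<tau>"
proof -
  assume k: "k \<notin> set \<tau>"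
  have "filter (\<lambda>y. \<not> y < k) \<tau> = filter (\<lambda>y. k < y) \<tau>"
  proof (rule filter_cong[OF refl])
    fix x assume "x \<in> set \<tau>"
    then have "x \<noteq> k" using k by auto
    then show "(\<not> x < k) = (k < x)" by auto
  qed
  then show ?thesis using sum_length_filter_compl[of "\<lambda>y. y < k" \<tau>] by simp
qed

lemma Kc_one:
  assumes "q > 0" "C * C = mu q ^ m * complex_of_real (qfact q m)"
  shows "(-1) ^ m * (- mu q) ^ m * inverse (C * C) * complex_of_real (qfact q m) = 1"
proof -
  have "(-1) ^ m * (- mu q) ^ m = mu q ^ m" by (simp add: power_mult_distrib[symmetric])
  moreover have "mu q ^ m \<noteq> 0" using mu_nz[OF assms(1)] by simp
  moreover have "complex_of_real (qfact q m) \<noteq> 0" using qfact_pos[OF assms(1), of m] by simp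
  ultimately show ?thesis unfolding assms(2) by (simp add: field_simps)
qed

lemma eq1_core:
  fixes C :: complex and I :: "nat set" and W :: "nat list set"
  assumes q: "q > 0" and fI: "finite I" and cI: "card I = n" and n2: "2 \<le> n"
    and x: "x \<in> tpow_sub I 1" and fW: "finite W" and PW: "permutations_of_set I \<subseteq> W"
    and lW: "\<forall>js\<in>W. length js = n"
    and CC: "C * C = mu q ^ (n - 1) * complex_of_real (qfact q (n - 1))"
  shows "(\<Sum>js\<in>W. (-1)^(n-1) * (Pv q I js / C) * (x (take 1 (js @ ks)) * (Pv q I (drop 1 (js @ ks)) / C))) = x ks"
proof -
  define f where "f js = (-1)^(n-1) * (Pv q I js / C) * (x (take 1 (js @ ks)) * (Pv q I (drop 1 (js @ ks)) / C))" for js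
  have tk: "take 1 (js @ ks) = take 1 js" "drop 1 (js @ ks) = drop 1 js @ ks" if "js \<in> W" for js
    using lW that n2 by auto
  have main: "(\<Sum>js\<in>W. f js) = x ks"
  proof (cases "\<exists>k\<in>I. ks = [k]")
    case True
    then obtain k where k: "k \<in> I" "ks = [k]" by blast
    define S where "S = (\<lambda>\<tau>. k # \<tau>) ` permutations_of_set (I - {k})"
    have consP: "k # \<tau> \<in> permutations_of_set I" if "\<tau> \<in> permutations_of_set (I - {k})" for \<tau>
      using that k by (auto simp: permutations_of_set_def)
    have snocP: "\<tau> @ [k] \<in> permutations_of_set I" if "\<tau> \<in> permutations_of_set (I - {k})" for \<tau>
      using that k by (auto simp: permutations_of_set_def)
    have SW: "S \<subseteq> W" using PW consP unfolding S_def by blast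
    have zero: "\<forall>js\<in>W - S. f js = 0"
    proof
      fix js assume js: "js \<in> W - S"
      show "f js = 0"
      proof (rule ccontr)
        assume nz: "f js \<noteq> 0"
        then have "Pv q I js \<noteq> 0" unfolding f_def by auto
        then have p1: "js \<in> permutations_of_set I" by (rule Pv_nz)
        have "Pv q I (drop 1 js @ ks) \<noteq> 0" using nz tk js unfolding f_def by auto
        then have p2: "drop 1 js @ [k] \<in> permutations_of_set I" using Pv_nz k by simp
        obtain a \<tau> where js': "js = a # \<tau>" using lW js n2 by (cases js) auto
        have h: "k \<notin> set \<tau>" "distinct \<tau>" "insert a (set \<tau>) = I" "a \<notin> set \<tau>"
          using p1 p2 js' by (auto simp: permutations_of_set_def)
        then have "a = k" using k(1) by auto
        moreover have "\<tau> \<in> permutations_of_set (I - {k})" using h \<open>a = k\<close> by (auto simp: permutations_of_set_def)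
        ultimately have "js \<in> S" unfolding S_def js' by auto
        then show False using js by auto
      qed
    qed
    define K where "K = (-1)^(n-1) * (-mu q)^(n-1) * inverse (C*C)"
    have "(\<Sum>js\<in>W. f js) = (\<Sum>js\<in>S. f js)" by (rule sum.mono_neutral_right[OF fW SW zero])
    also have "\<dots> = (\<Sum>\<tau>\<in>permutations_of_set (I - {k}). f (k # \<tau>))"
      unfolding S_def by (subst sum.reindex) (auto simp: inj_on_def)
    also have "\<dots> = (\<Sum>\<tau>\<in>permutations_of_set (I - {k}). K * x ks * complex_of_real q ^ invl \<tau>)"
    proof (rule sum.cong[OF refl])
      fix \<tau> assume t: "\<tau> \<in> permutations_of_set (I - {k})"
      define a where "a = length (filter (\<lambda>y. y < k) \<tau>)"
      define b where "b = length (filter (\<lambda>y. k < y) \<tau>)"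
      have lt: "length \<tau> = n - 1" using perm_len[OF _ t] fI cI k by simp
      have ab: "a + b = n - 1" unfolding a_def b_def using filt[of k \<tau>] t lt by (auto simp: permutations_of_set_def)
      have P1: "Pv q I (k # \<tau>) = (- mu q) ^ a * (- mu q) ^ invl \<tau>"
        using Pv_in[OF consP[OF t]] by (simp add: a_def power_add)
      have P2: "Pv q I (\<tau> @ [k]) = (- mu q) ^ invl \<tau> * (- mu q) ^ b"
        using Pv_in[OF snocP[OF t]] by (simp add: b_def invl_snoc power_add)
      have e1: "(- mu q) ^ a * (- mu q) ^ b = (- mu q) ^ (n - 1)" by (simp only: ab[symmetric] power_add)
      have e2: "(- mu q) ^ invl \<tau> * (- mu q) ^ invl \<tau> = complex_of_real q ^ invl \<tau>" using pw q by simp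
      have "f (k # \<tau>) = (-1)^(n-1) * ((- mu q) ^ a * (- mu q) ^ b) * inverse (C*C) * x ks * ((- mu q) ^ invl \<tau> * (- mu q) ^ invl \<tau>)"
        unfolding f_def k(2) by (simp add: P1 P2 divide_inverse mult_ac)
      also have "\<dots> = K * x ks * complex_of_real q ^ invl \<tau>"
        unfolding e1 e2 K_def by simp
      finally show "f (k # \<tau>) = K * x ks * complex_of_real q ^ invl \<tau>" .
    qed
    also have "\<dots> = K * x ks * complex_of_real (\<Sum>\<tau>\<in>permutations_of_set (I - {k}). q ^ invl \<tau>)"
      by (simp add: sum_distrib_left)
    also have "\<dots> = (K * complex_of_real (qfact q (n - 1))) * x ks"
      using mahonian[of "I - {k}" q] fI cI k by (simp add: mult_ac)
    also have "\<dots> = x ks" using Kc_one[OF q CC] unfolding K_def by simp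
    finally show ?thesis .
  next
    case False
    have x0: "x ks = 0"
    proof (rule ccontr)
      assume "x ks \<noteq> 0"
      then have "length ks = 1" "set ks \<subseteq> I" using x unfolding tpow_sub_def by auto
      then show False using False by (cases ks) auto
    qed
    have "f js = 0" if js: "js \<in> W" for js
    proof (rule ccontr)
      assume nz: "f js \<noteq> 0"
      have "Pv q I (drop 1 js @ ks) \<noteq> 0" using nz tk js unfolding f_def by auto
      then have p2: "drop 1 js @ ks \<in> permutations_of_set I" by (rule Pv_nz)
      have "length (drop 1 js @ ks) = n" using perm_len[OF fI p2] cI by simp
      then have "length ks = 1" using lW js n2 by simp
      moreover have "set ks \<subseteq> I" using p2 by (auto simp: permutations_of_set_def)
      ultimately show False using False by (cases ks) auto
    qed
    then show ?thesis using x0 by simp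
  qed
  then show ?thesis unfolding f_def .
qed

lemma eq2_core:
  fixes C :: complex and I :: "nat set" and W :: "nat list set"
  assumes q: "q > 0" and fI: "finite I" and cI: "card I = n" and n2: "2 \<le> n"
    and y: "y \<in> tpow_sub I (n - 1)" "Eig q y" and fW: "finite W" and PW: "permutations_of_set I \<subseteq> W"
    and lW: "\<forall>js\<in>W. length js = n"
    and CC: "C * C = mu q ^ (n - 1) * complex_of_real (qfact q (n - 1))"
  shows "(\<Sum>js\<in>W. (Pv q I js / C) * (y (take (n - 1) (js @ ks)) * ((-1)^(n-1) * (Pv q I (drop (n - 1) (js @ ks)) / C)))) = y ks"
proof -
  define f where "f js = (Pv q I js / C) * (y (take (n - 1) (js @ ks)) * ((-1)^(n-1) * (Pv q I (drop (n - 1) (js @ ks)) / C)))" for js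
  have tk: "take (n - 1) (js @ ks) = take (n - 1) js" "drop (n - 1) (js @ ks) = drop (n - 1) js @ ks" if "js \<in> W" for js
    using lW that n2 by auto
  have main: "(\<Sum>js\<in>W. f js) = y ks"
  proof (cases "distinct ks \<and> set ks \<subseteq> I \<and> length ks = n - 1")
    case True
    have cks: "card (set ks) = n - 1" using True distinct_card by metis
    have "card (I - set ks) = 1" using True cks cI fI n2 by (simp add: card_Diff_subset)
    then obtain k where kk: "I - set ks = {k}" by (rule card_1_singletonE)
    have k: "k \<in> I" "k \<notin> set ks" using kk by auto
    have Ik: "I - {k} = set ks" using kk True by auto
    have Ik2: "insert k (set ks) = I" using kk True by auto
    define S where "S = (\<lambda>\<tau>. \<tau> @ [k]) ` permutations_of_set (set ks)"
    have snocP: "\<tau> @ [k] \<in> permutations_of_set I" if "\<tau> \<in> permutations_of_set (set ks)" for \<tau>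
      using that k Ik2 by (auto simp: permutations_of_set_def)
    have consP: "k # ks \<in> permutations_of_set I" using True k Ik2 by (auto simp: permutations_of_set_def)
    have SW: "S \<subseteq> W" using PW snocP unfolding S_def by blast
    have zero: "\<forall>js\<in>W - S. f js = 0"
    proof
      fix js assume js: "js \<in> W - S"
      show "f js = 0"
      proof (rule ccontr)
        assume nz: "f js \<noteq> 0"
        then have "Pv q I js \<noteq> 0" unfolding f_def by auto
        then have p1: "js \<in> permutations_of_set I" by (rule Pv_nz)
        have "Pv q I (drop (n - 1) js @ ks) \<noteq> 0" using nz tk js unfolding f_def by auto
        then have p2: "drop (n - 1) js @ ks \<in> permutations_of_set I" by (rule Pv_nz)
        have ljs: "length js = n" using lW js by auto
        then have jne: "js \<noteq> []" using n2 by auto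
        define bt where "bt = butlast js"
        define l where "l = last js"
        have jsd: "js = bt @ [l]" unfolding bt_def l_def using jne by simp
        have lbt: "length bt = n - 1" unfolding bt_def using ljs by simp
        have dr: "drop (n - 1) js = [l]" unfolding jsd using lbt by simp
        have h1: "l \<notin> set ks" using p2 dr by (auto simp: permutations_of_set_def)
        have h2: "l \<in> I" "distinct bt" "l \<notin> set bt" "insert l (set bt) = I"
          using p1 unfolding jsd by (auto simp: permutations_of_set_def)
        have "l = k" using h1 h2 kk by auto
        then have "bt \<in> permutations_of_set (set ks)"
          using h2 Ik by (auto simp: permutations_of_set_def)
        then have "js \<in> S" unfolding S_def jsd \<open>l = k\<close> by auto
        then show False using js by auto
      qed
    qed
    define K where "K = (-1)^(n-1) * (-mu q)^(n-1) * inverse (C*C)"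
    define Y where "Y = y (sorted_list_of_set (set ks))"
    have yks: "y ks = (- mu q) ^ invl ks * Y" unfolding Y_def using Eig_antisym[OF q y(2), of ks] True by simp
    define a where "a = length (filter (\<lambda>y. y < k) ks)"
    define b where "b = length (filter (\<lambda>y. k < y) ks)"
    have ab: "a + b = n - 1" unfolding a_def b_def using filt[of k ks] k True by auto
    have P2: "Pv q I (k # ks) = (- mu q) ^ a * (- mu q) ^ invl ks"
      using Pv_in[OF consP] by (simp add: a_def power_add)
    have e1: "(- mu q) ^ a * (- mu q) ^ b = (- mu q) ^ (n - 1)" by (simp only: ab[symmetric] power_add)
    have "(\<Sum>js\<in>W. f js) = (\<Sum>js\<in>S. f js)" by (rule sum.mono_neutral_right[OF fW SW zero])
    also have "\<dots> = (\<Sum>\<tau>\<in>permutations_of_set (set ks). f (\<tau> @ [k]))"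
      unfolding S_def by (subst sum.reindex) (auto simp: inj_on_def)
    also have "\<dots> = (\<Sum>\<tau>\<in>permutations_of_set (set ks). K * y ks * complex_of_real q ^ invl \<tau>)"
    proof (rule sum.cong[OF refl])
      fix \<tau> assume t: "\<tau> \<in> permutations_of_set (set ks)"
      have lt: "length \<tau> = n - 1" using perm_len[OF _ t] cks by simp
      have st: "set \<tau> = set ks" "distinct \<tau>" using t by (auto simp: permutations_of_set_def)
      have bt: "length (filter (\<lambda>y. k < y) \<tau>) = b"
        unfolding b_def using st True by (simp add: distinct_length_filter)
      have P1: "Pv q I (\<tau> @ [k]) = (- mu q) ^ invl \<tau> * (- mu q) ^ b"
        using Pv_in[OF snocP[OF t]] bt by (simp add: invl_snoc power_add)
      have yt: "y \<tau> = (- mu q) ^ invl \<tau> * Y" unfolding Y_def using Eig_antisym[OF q y(2), of \<tau>] st by simp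
      have e2: "(- mu q) ^ invl \<tau> * (- mu q) ^ invl \<tau> = complex_of_real q ^ invl \<tau>" using pw q by simp
      have tk2: "take (n - 1) ((\<tau> @ [k]) @ ks) = \<tau>" "drop (n - 1) ((\<tau> @ [k]) @ ks) = k # ks"
        using lt by simp_all
      have "f (\<tau> @ [k]) = (-1)^(n-1) * ((- mu q) ^ a * (- mu q) ^ b) * inverse (C*C) * ((- mu q) ^ invl ks * Y) * ((- mu q) ^ invl \<tau> * (- mu q) ^ invl \<tau>)"
        unfolding f_def tk2 P1 P2 yt by (simp add: divide_inverse mult_ac)
      also have "\<dots> = K * y ks * complex_of_real q ^ invl \<tau>"
        unfolding e1 e2 K_def yks by simp
      finally show "f (\<tau> @ [k]) = K * y ks * complex_of_real q ^ invl \<tau>" .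
    qed
    also have "\<dots> = K * y ks * complex_of_real (\<Sum>\<tau>\<in>permutations_of_set (set ks). q ^ invl \<tau>)"
      by (simp add: sum_distrib_left)
    also have "\<dots> = (K * complex_of_real (qfact q (n - 1))) * y ks"
      using mahonian[of "set ks" q] cks by (simp add: mult_ac)
    also have "\<dots> = y ks" using Kc_one[OF q CC] unfolding K_def by simp
    finally show ?thesis .
  next
    case False
    have y0: "y ks = 0"
    proof (cases "distinct ks")
      case True
      show ?thesis
      proof (rule ccontr)
        assume "y ks \<noteq> 0"
        then have "length ks = n - 1" "set ks \<subseteq> I" using y(1) unfolding tpow_sub_def by auto
        then show False using False True by auto
      qed
    next
      case False
      then show ?thesis using Eig_antisym[OF q y(2), of ks] by simp
    qed
    have "f js = 0" if js: "js \<in> W" for js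
    proof (rule ccontr)
      assume nz: "f js \<noteq> 0"
      have "Pv q I (drop (n - 1) js @ ks) \<noteq> 0" using nz tk js unfolding f_def by auto
      then have p2: "drop (n - 1) js @ ks \<in> permutations_of_set I" by (rule Pv_nz)
      have "length (drop (n - 1) js @ ks) = n" using perm_len[OF fI p2] cI by simp
      then have "length ks = n - 1" using lW js n2 by simp
      moreover have "set ks \<subseteq> I" "distinct ks" using p2 by (auto simp: permutations_of_set_def)
      ultimately show False using False by auto
    qed
    then show ?thesis using y0 by simp
  qed
  then show ?thesis unfolding f_def .
qed

theorem theorem5p5:
  fixes q :: real and d n :: nat and "is" :: "nat list"
  assumes "q > 0"
    and "2 \<le> n" and "n \<le> d"
    and "length is = n"
    and "sorted_wrt (<) is"
    and "set is \<subseteq> {1..d}"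
  shows "Rvec q is \<in> tens_sub (n - 1) (Hbar q is) (tpow_sub (set is) 1)
     \<and> Rbar q is \<in> tens_sub 1 (tpow_sub (set is) 1) (Hbar q is)
     \<and> (\<forall>x \<in> tpow_sub (set is) 1. contract d n (Rbar q is) (tens 1 x (Rvec q is)) = x)
     \<and> (\<forall>y \<in> Hbar q is. contract d n (Rvec q is) (tens (n - 1) y (Rbar q is)) = y)"
proof -
  define I where "I = set is"
  have q: "q > 0" using assms(1) .
  have dist: "distinct is" using assms(5) strict_sorted_iff by blast
  have fI: "finite I" unfolding I_def by simp
  have cI: "card I = n" unfolding I_def using dist assms(4) distinct_card by metis
  define W where "W = words d n"
  have fW: "finite W" unfolding W_def words_def
    by (rule finite_subset[OF _ finite_lists_length_eq[of "{1..d}" n]]) auto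
  have PW: "permutations_of_set I \<subseteq> W"
  proof
    fix js assume js: "js \<in> permutations_of_set I"
    have "length js = n" using perm_len[OF fI js] cI by simp
    moreover have "set js \<subseteq> {1..d}" using js assms(6) unfolding I_def by (auto simp: permutations_of_set_def)
    ultimately show "js \<in> W" unfolding W_def words_def by simp
  qed
  have lW: "\<forall>js\<in>W. length js = n" by (simp add: W_def words_def)
  define c0 where "c0 = sqrt q powr ((real n - 1) / 2) * sqrt (qfact q (n - 1))"
  define C where "C = complex_of_real c0"
  have Rv: "Rvec q is = (\<lambda>js. Pv q I js / C)"
    unfolding Rvec_def Svec_closed[OF assms(5)] C_def c0_def I_def assms(4) by simp
  have Rb: "Rbar q is = (\<lambda>js. (-1)^(n-1) * (Pv q I js / C))"
    unfolding Rbar_def Rv assms(4) ..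
  have CC: "C * C = mu q ^ (n - 1) * complex_of_real (qfact q (n - 1))"
  proof -
    have sq: "sqrt q > 0" using q by simp
    have e: "(real n - 1) / 2 + (real n - 1) / 2 = real (n - 1)" using assms(2) by (simp add: of_nat_diff)
    have p1: "sqrt q powr ((real n - 1) / 2) * sqrt q powr ((real n - 1) / 2) = sqrt q ^ (n - 1)"
      using sq by (simp add: powr_add[symmetric] e powr_realpow)
    have p2: "sqrt (qfact q (n - 1)) * sqrt (qfact q (n - 1)) = qfact q (n - 1)"
      using qfact_pos[OF q, of "n - 1"] by simp
    have "c0 * c0 = sqrt q ^ (n - 1) * qfact q (n - 1)"
      unfolding c0_def using p1 p2 by (simp add: algebra_simps)
    then show ?thesis unfolding C_def mu_def by (simp flip: of_real_mult of_real_power)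
  qed
  have HB: "Hbar q is = Eop q (n - 1) ` tpow_sub I (n - 1)" unfolding Hbar_def I_def assms(4) ..
  define ek where "ek k = (\<lambda>js::nat list. if js = [k] then (1::complex) else 0)" for k
  have c1: "Rvec q is \<in> tens_sub (n - 1) (Hbar q is) (tpow_sub (set is) 1)"
  proof -
    define yk where "yk k = (\<lambda>\<sigma>. Pv q I (\<sigma> @ [k]))" for k
    have mem: "tens (n - 1) (yk k) (ek k) \<in> {tens (n - 1) v w | v w. v \<in> Hbar q is \<and> w \<in> tpow_sub (set is) 1}"
      if "k \<in> I" for k
    proof -
      have t1: "yk k \<in> tpow_sub I (n - 1)" unfolding yk_def by (rule tpow_snoc[OF fI cI]) (use assms(2) in simp)
      have t2: "Eig q (yk k)" unfolding yk_def by (rule Eig_snoc) (use q in simp)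
      have "yk k \<in> Hbar q is" unfolding HB by (rule Hbar_intro[OF q t1 t2])
      moreover have "ek k \<in> tpow_sub (set is) 1" unfolding ek_def I_def[symmetric] by (rule tpow_e[OF that])
      ultimately show ?thesis by blast
    qed
    have eq: "Rvec q is = (\<lambda>js. \<Sum>k\<in>I. inverse C * tens (n - 1) (yk k) (ek k) js)"
    proof
      fix js :: "nat list"
      have g: "tens (n - 1) (yk k) (ek k) js = (if drop (n - 1) js = [k] then Pv q I js else 0)" for k
      proof (cases "drop (n - 1) js = [k]")
        case True
        then have "take (n - 1) js @ [k] = js" by (metis append_take_drop_id)
        then show ?thesis using True by (simp add: tens_def yk_def ek_def)
      qed (simp add: tens_def yk_def ek_def)
      have "(\<Sum>k\<in>I. inverse C * tens (n - 1) (yk k) (ek k) js) = inverse C * Pv q I js"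
      proof (cases "\<exists>k0. drop (n - 1) js = [k0]")
        case True
        then obtain k0 where k0: "drop (n - 1) js = [k0]" by blast
        have "(\<Sum>k\<in>I. inverse C * tens (n - 1) (yk k) (ek k) js) = (\<Sum>k\<in>I. if k = k0 then inverse C * Pv q I js else 0)"
          using k0 by (intro sum.cong refl) (subst g, simp)
        also have "\<dots> = (if k0 \<in> I then inverse C * Pv q I js else 0)" using fI by simp
        also have "\<dots> = inverse C * Pv q I js"
        proof (cases "k0 \<in> I")
          case False
          have "Pv q I js = 0"
          proof (rule ccontr)
            assume "Pv q I js \<noteq> 0"
            then have "js \<in> permutations_of_set I" by (rule Pv_nz)
            moreover have "k0 \<in> set js" using k0 by (metis in_set_dropD list.set_intros(1))
            ultimately show False using False by (auto simp: permutations_of_set_def)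
          qed
          then show ?thesis by simp
        qed simp
        finally show ?thesis .
      next
        case False
        have "Pv q I js = 0"
        proof (rule ccontr)
          assume "Pv q I js \<noteq> 0"
          then have "js \<in> permutations_of_set I" by (rule Pv_nz)
          then have "length js = n" using perm_len[OF fI] cI by simp
          then have "length (drop (n - 1) js) = Suc 0" using assms(2) by simp
          then obtain k0 where "drop (n - 1) js = [k0]" by (metis length_0_conv length_Suc_conv)
          then show False using False by blast
        qed
        moreover have "tens (n - 1) (yk k) (ek k) js = 0" for k using False g by auto
        ultimately show ?thesis by simp
      qed
      then show "Rvec q is js = (\<Sum>k\<in>I. inverse C * tens (n - 1) (yk k) (ek k) js)"
        unfolding Rv by (simp add: divide_inverse mult.commute)
    qed
    have "(\<lambda>js. \<Sum>k\<in>I. inverse C * tens (n - 1) (yk k) (ek k) js)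
        \<in> cspan {tens (n - 1) v w | v w. v \<in> Hbar q is \<and> w \<in> tpow_sub (set is) 1}"
      by (rule cspan_sum[where c = "\<lambda>k. inverse C" and f = "\<lambda>k. tens (n - 1) (yk k) (ek k)", OF fI mem])
    then show ?thesis unfolding eq tens_sub_def .
  qed
  have c2: "Rbar q is \<in> tens_sub 1 (tpow_sub (set is) 1) (Hbar q is)"
  proof -
    define zk where "zk k = (\<lambda>\<sigma>. Pv q I (k # \<sigma>))" for k
    have mem: "tens 1 (ek k) (zk k) \<in> {tens 1 v w | v w. v \<in> tpow_sub (set is) 1 \<and> w \<in> Hbar q is}"
      if "k \<in> I" for k
    proof -
      have t1: "zk k \<in> tpow_sub I (n - 1)" unfolding zk_def by (rule tpow_cons[OF fI cI]) (use assms(2) in simp)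
      have t2: "Eig q (zk k)" unfolding zk_def by (rule Eig_cons) (use q in simp)
      have "zk k \<in> Hbar q is" unfolding HB by (rule Hbar_intro[OF q t1 t2])
      moreover have "ek k \<in> tpow_sub (set is) 1" unfolding ek_def I_def[symmetric] by (rule tpow_e[OF that])
      ultimately show ?thesis by blast
    qed
    define c where "c = (-1)^(n-1) * inverse C"
    have eq: "Rbar q is = (\<lambda>js. \<Sum>k\<in>I. c * tens 1 (ek k) (zk k) js)"
    proof
      fix js :: "nat list"
      have g: "tens 1 (ek k) (zk k) js = (if take 1 js = [k] then Pv q I js else 0)" for k
      proof (cases "take 1 js = [k]")
        case True
        then have "k # drop 1 js = js" by (metis append_take_drop_id append_Cons append_Nil)
        then show ?thesis using True by (simp add: tens_def zk_def ek_def)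
      qed (simp add: tens_def zk_def ek_def)
      have "(\<Sum>k\<in>I. c * tens 1 (ek k) (zk k) js) = c * Pv q I js"
      proof (cases "\<exists>k0. take 1 js = [k0]")
        case True
        then obtain k0 where k0: "take 1 js = [k0]" by blast
        have "(\<Sum>k\<in>I. c * tens 1 (ek k) (zk k) js) = (\<Sum>k\<in>I. if k = k0 then c * Pv q I js else 0)"
          using k0 by (intro sum.cong refl) (subst g, simp)
        also have "\<dots> = (if k0 \<in> I then c * Pv q I js else 0)" using fI by simp
        also have "\<dots> = c * Pv q I js"
        proof (cases "k0 \<in> I")
          case False
          have "Pv q I js = 0"
          proof (rule ccontr)
            assume "Pv q I js \<noteq> 0"
            then have "js \<in> permutations_of_set I" by (rule Pv_nz)
            moreover have "k0 \<in> set js" using k0 by (metis in_set_takeD list.set_intros(1))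
            ultimately show False using False by (auto simp: permutations_of_set_def)
          qed
          then show ?thesis by simp
        qed simp
        finally show ?thesis .
      next
        case False
        have "Pv q I js = 0"
        proof (rule ccontr)
          assume "Pv q I js \<noteq> 0"
          then have "js \<in> permutations_of_set I" by (rule Pv_nz)
          then have "length js = n" using perm_len[OF fI] cI by simp
          then obtain a rest where "js = a # rest" using assms(2) by (cases js) auto
          then show False using False by simp
        qed
        moreover have "tens 1 (ek k) (zk k) js = 0" for k using False g by auto
        ultimately show ?thesis by simp
      qed
      then show "Rbar q is js = (\<Sum>k\<in>I. c * tens 1 (ek k) (zk k) js)"
        unfolding Rb c_def by (simp add: divide_inverse mult_ac)
    qed
    have "(\<lambda>js. \<Sum>k\<in>I. c * tens 1 (ek k) (zk k) js)
        \<in> cspan {tens 1 v w | v w. v \<in> tpow_sub (set is) 1 \<and> w \<in> Hbar q is}"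
      by (rule cspan_sum[where c = "\<lambda>k. c" and f = "\<lambda>k. tens 1 (ek k) (zk k)", OF fI mem])
    then show ?thesis unfolding eq tens_sub_def .
  qed
  have c3: "\<forall>x \<in> tpow_sub (set is) 1. contract d n (Rbar q is) (tens 1 x (Rvec q is)) = x"
  proof
    fix x assume x: "x \<in> tpow_sub (set is) 1"
    then have x': "x \<in> tpow_sub I 1" unfolding I_def .
    show "contract d n (Rbar q is) (tens 1 x (Rvec q is)) = x"
    proof
      fix ks :: "nat list"
      have "contract d n (Rbar q is) (tens 1 x (Rvec q is)) ks
          = (\<Sum>js\<in>W. (-1)^(n-1) * (Pv q I js / C) * (x (take 1 (js @ ks)) * (Pv q I (drop 1 (js @ ks)) / C)))"
        unfolding contract_def tens_def Rb Rv W_def by (simp add: C_def cnj_Pv)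
      also have "\<dots> = x ks" by (rule eq1_core[OF q fI cI assms(2) x' fW PW lW CC])
      finally show "contract d n (Rbar q is) (tens 1 x (Rvec q is)) ks = x ks" .
    qed
  qed
  have c4: "\<forall>y \<in> Hbar q is. contract d n (Rvec q is) (tens (n - 1) y (Rbar q is)) = y"
  proof
    fix y assume y: "y \<in> Hbar q is"
    have y1: "y \<in> tpow_sub I (n - 1)" "Eig q y" using Hbar_props[OF q] y unfolding HB by auto
    show "contract d n (Rvec q is) (tens (n - 1) y (Rbar q is)) = y"
    proof
      fix ks :: "nat list"
      have "contract d n (Rvec q is) (tens (n - 1) y (Rbar q is)) ks
          = (\<Sum>js\<in>W. (Pv q I js / C) * (y (take (n - 1) (js @ ks)) * ((-1)^(n-1) * (Pv q I (drop (n - 1) (js @ ks)) / C))))"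
        unfolding contract_def tens_def Rb Rv W_def by (simp add: C_def cnj_Pv)
      also have "\<dots> = y ks" by (rule eq2_core[OF q fI cI assms(2) y1 fW PW lW CC])
      finally show "contract d n (Rvec q is) (tens (n - 1) y (Rbar q is)) ks = y ks" .
    qed
  qed
  show ?thesis using c1 c2 c3 c4 by blast
qed

end
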